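(* Let $n\ge1$, $G=\mathrm{SL}(n+1,\mathbb{R})$, and for $t>0$ let $a(t)=\mathrm{diag}(t^n,t^{-1},\dots,t^{-1})$. Let $\Omega\subset\mathbb{R}$ be open, $\Phi:\Omega\to G$ a $C^1$ map, and let $\phi:\Omega\to\mathbb{R}^{n+1}$ be the first row of $\Phi$. Let $s\in\Omega$ be such that $\phi$ is $(n+1)$-times differentiable and nondegenerate at $s$. Then there exist a nilpotent matrix $B_s\in M(n+1,\mathbb{R})$ of rank $n$ and elements $\xi_s(1),\xi_s(-1)\in G$ such that for every $t\neq0$ with $s+t^{-1}\in\Omega$, $$a(|t|)\Phi(s+t^{-1})=\bigl(I+t\,o(t^{-1})\bigr)\,\xi_s(\sigma)\,(I-tB_s)^{-1},\qquad \sigma=t/|t|,$$ where $o(t^{-1})\in M(n+1,\mathbb{R})$ is a matrix-valued function of $t$ with $t\,o(t^{-1})\to0$ as $|t|\to\infty$.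
   Context: For $d=1$, nondegeneracy of $\phi$ at $s$ means (in the sense of the paper's definition): $\phi'(s)\ne0$, and with $\mathcal{T}=\mathbb{R}\phi'(s)$ there is a subspace $\mathcal{L}\ni\phi(s)$ with $\mathcal{T}\oplus\mathcal{L}=\mathbb{R}^{n+1}$, a vector $0\ne v\in\mathcal{T}$, a neighborhood $\Omega_1$ of $s$ and $r_0>0$ such that the curve $\rho_v(r)=\phi(\Omega_1)\cap(rv+\mathcal{L})$, $|r|<r_0$, is nondegenerate at $0$, where a curve $\zeta$ in $\mathbb{R}^k$ is nondegenerate at a point if its derivatives of orders $0,\dots,k-1$ exist there and span $\mathbb{R}^k$. Vectors in $\mathbb{R}^{n+1}$ are row vectors and matrices act on them from the right. *)

theory Defs
  imports "HOL-Analysis.Analysis"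
begin

text \<open>Index type 'n of cardinality n+1; the "first" index is the least element.\<close>

definition first_idx :: "'n::{finite,wellorder}" where
  "first_idx = (LEAST i. True)"

definition a_diag :: "real \<Rightarrow> (real^('n::{finite,wellorder}))^('n::{finite,wellorder})" where
  "a_diag t = (\<chi> i j. if i = j then (if i = first_idx then t ^ (CARD('n) - 1) else inverse t) else 0)"

text \<open>f is m-times differentiable at x, with D k the k-th derivative (valid at x for k \<le> m):
  the derivatives of order < m exist on a neighbourhood of x, the m-th exists at x.\<close>
definition higher_diff_at ::
  "nat \<Rightarrow> (real \<Rightarrow> 'a::real_normed_vector) \<Rightarrow> real \<Rightarrow> (nat \<Rightarrow> real \<Rightarrow> 'a) \<Rightarrow> bool" where
  "higher_diff_at m f x D \<longleftrightarrow> D 0 = f \<and>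
     (\<exists>U. open U \<and> x \<in> U \<and>
        (\<forall>k. Suc k < m \<longrightarrow> (\<forall>y\<in>U. (D k has_vector_derivative D (Suc k) y) (at y)))) \<and>
     (0 < m \<longrightarrow> (D (m - 1) has_vector_derivative D m x) (at x))"

definition curve_nondeg_at :: "(real \<Rightarrow> real^'n::finite) \<Rightarrow> real \<Rightarrow> bool" where
  "curve_nondeg_at \<zeta> x \<longleftrightarrow>
     (\<exists>D. higher_diff_at (CARD('n) - 1) \<zeta> x D \<and>
          span {D k x | k. k \<le> CARD('n) - 1} = UNIV)"

definition nondeg_at :: "(real \<Rightarrow> real^'n::finite) \<Rightarrow> real set \<Rightarrow> real \<Rightarrow> bool" where
  "nondeg_at \<phi> \<Omega> s \<longleftrightarrow>
     \<phi> differentiable (at s) \<and> vector_derivative \<phi> (at s) \<noteq> 0 \<and>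
     (let T = span {vector_derivative \<phi> (at s)} in
      \<exists>L v \<Omega>1 r0 \<rho>. subspace L \<and> \<phi> s \<in> L \<and> T \<inter> L = {0} \<and>
        {x + y | x y. x \<in> T \<and> y \<in> L} = UNIV \<and>
        v \<in> T \<and> v \<noteq> 0 \<and> open \<Omega>1 \<and> s \<in> \<Omega>1 \<and> \<Omega>1 \<subseteq> \<Omega> \<and> 0 < r0 \<and>
        (\<forall>r. \<bar>r\<bar> < r0 \<longrightarrow> \<phi> ` \<Omega>1 \<inter> (\<lambda>l. r *\<^sub>R v + l) ` L = {\<rho> r}) \<and>
        curve_nondeg_at \<rho> 0)"

definition nilpotent_mat :: "real^'n^'n \<Rightarrow> bool" where
  "nilpotent_mat B \<longleftrightarrow> (\<exists>k. (((**) B) ^^ k) (mat 1) = 0)"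

end

theory Submission
  imports Defs
begin


lemma poly_vec_deriv:
  fixes c :: "nat \<Rightarrow> 'a::real_normed_vector"
  shows "((\<lambda>y. \<Sum>k\<le>Suc m. (y^k / fact k) *\<^sub>R c k) has_vector_derivative
          (\<Sum>k\<le>m. (y^k / fact k) *\<^sub>R c (Suc k))) (at y)"
proof -
  have eq: "(\<lambda>y. \<Sum>k\<le>Suc m. (y^k / fact k) *\<^sub>R c k) =
            (\<lambda>y. c 0 + (\<Sum>k\<le>m. (y^Suc k / fact (Suc k)) *\<^sub>R c (Suc k)))"
    by (simp only: sum.atMost_Suc_shift) simp
  have d: "((\<lambda>y. y^Suc k / fact (Suc k)) has_real_derivative y^k / fact k) (at y)" for k
  proof -
    have "((\<lambda>y. y^Suc k / fact (Suc k)) has_real_derivative (real (Suc k) * y^k) / fact (Suc k)) (at y)"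
      using DERIV_cdivide[OF DERIV_pow[of "Suc k" y], of "fact (Suc k)"] by simp
    moreover have "(real (Suc k) * y^k) / fact (Suc k) = y^k / fact k"
      by (simp add: fact_Suc field_simps del: of_nat_Suc)
    ultimately show ?thesis by simp
  qed
  have "((\<lambda>y. \<Sum>k\<le>m. (y^Suc k / fact (Suc k)) *\<^sub>R c (Suc k)) has_vector_derivative
          (\<Sum>k\<le>m. (y^k / fact k) *\<^sub>R c (Suc k))) (at y)"
    apply (rule has_vector_derivative_sum)
    subgoal for k
      by (rule has_vector_derivative_eq_rhs, rule has_vector_derivative_scaleR[OF d[of k] has_vector_derivative_const], simp)
    done
  then show ?thesis unfolding eq
    by (rule has_vector_derivative_eq_rhs[OF has_vector_derivative_add[OF has_vector_derivative_const]]) simp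
qed

lemma sum_pow0: "(\<Sum>k\<le>m. ((0::real)^k / fact k) *\<^sub>R c k) = (c 0 :: 'a::real_vector)"
  by (induction m) auto

lemma higher_diff_mono:
  assumes "higher_diff_at (Suc m) f x D" shows "higher_diff_at m f x D"
proof -
  from assms obtain U where U: "open U" "x \<in> U"
    "\<forall>k. Suc k < Suc m \<longrightarrow> (\<forall>y\<in>U. (D k has_vector_derivative D (Suc k) y) (at y))"
    and D0: "D 0 = f"
    unfolding higher_diff_at_def by blast
  show ?thesis unfolding higher_diff_at_def
  proof (intro conjI)
    show "D 0 = f" by fact
    show "\<exists>U. open U \<and> x \<in> U \<and> (\<forall>k. Suc k < m \<longrightarrow> (\<forall>y\<in>U. (D k has_vector_derivative D (Suc k) y) (at y)))"
      using U by (intro exI[of _ U]) auto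
    show "0 < m \<longrightarrow> (D (m - 1) has_vector_derivative D m x) (at x)"
    proof
      assume "0 < m"
      then have "Suc (m-1) < Suc m" "Suc (m-1) = m" by auto
      then show "(D (m - 1) has_vector_derivative D m x) (at x)" using U(2,3) by metis
    qed
  qed
qed

lemma higher_diff_shift:
  assumes "higher_diff_at (Suc m) f x D" "0 < m"
  shows "higher_diff_at m (D 1) x (\<lambda>k. D (Suc k))"
proof -
  from assms(1) obtain U where U: "open U" "x \<in> U"
    "\<forall>k. Suc k < Suc m \<longrightarrow> (\<forall>y\<in>U. (D k has_vector_derivative D (Suc k) y) (at y))"
    and last: "(D m has_vector_derivative D (Suc m) x) (at x)"
    unfolding higher_diff_at_def by auto
  show ?thesis unfolding higher_diff_at_def
  proof (intro conjI)
    show "D (Suc 0) = D 1" by simp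
    show "\<exists>U. open U \<and> x \<in> U \<and> (\<forall>k. Suc k < m \<longrightarrow> (\<forall>y\<in>U. (D (Suc k) has_vector_derivative D (Suc (Suc k)) y) (at y)))"
      using U by (intro exI[of _ U]) auto
    show "0 < m \<longrightarrow> (D (Suc (m - 1)) has_vector_derivative D (Suc m) x) (at x)"
      using last assms(2) by simp
  qed
qed

lemma taylor_peano:
  fixes f :: "real \<Rightarrow> 'a::real_normed_vector"
  assumes "higher_diff_at m f x D" "0 < m"
  shows "\<forall>e>0. \<exists>d>0. \<forall>h. \<bar>h\<bar> < d \<longrightarrow>
           norm (f (x+h) - (\<Sum>k\<le>m. (h^k / fact k) *\<^sub>R D k x)) \<le> e * \<bar>h\<bar>^m"
  using assms
proof (induction m arbitrary: f D)
  case 0 then show ?case by simp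
next
  case (Suc m)
  show ?case
  proof (cases "m = 0")
    case True
    with Suc.prems have D0: "D 0 = f" and der: "(f has_vector_derivative D (Suc 0) x) (at x)"
      unfolding higher_diff_at_def by auto
    then have "(f has_derivative (\<lambda>h. h *\<^sub>R D (Suc 0) x)) (at x)" by (simp add: has_vector_derivative_def)
    then have *: "\<forall>e>0. \<exists>d>0. \<forall>y. norm(y - x) < d \<longrightarrow> norm (f y - f x - (y - x) *\<^sub>R D (Suc 0) x) \<le> e * norm (y - x)"
      by (simp add: has_derivative_at_alt)
    show ?thesis
    proof (intro allI impI)
      fix e :: real assume "e > 0"
      then obtain d where "d>0" and d: "\<forall>y. norm(y - x) < d \<longrightarrow> norm (f y - f x - (y - x) *\<^sub>R D (Suc 0) x) \<le> e * norm (y - x)"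
        using * by blast
      show "\<exists>d>0. \<forall>h. \<bar>h\<bar> < d \<longrightarrow> norm (f (x+h) - (\<Sum>k\<le>Suc m. (h^k / fact k) *\<^sub>R D k x)) \<le> e * \<bar>h\<bar>^Suc m"
      proof (intro exI[of _ d] conjI allI impI)
        fix h :: real assume "\<bar>h\<bar> < d"
        then have "norm (f (x+h) - f x - h *\<^sub>R D (Suc 0) x) \<le> e * \<bar>h\<bar>" using d[rule_format, of "x+h"] by simp
        then show "norm (f (x+h) - (\<Sum>k\<le>Suc m. (h^k / fact k) *\<^sub>R D k x)) \<le> e * \<bar>h\<bar>^Suc m"
          using True D0 by (simp add: algebra_simps)
      qed (use \<open>d>0\<close> in simp)
    qed
  next
    case False
    then have m0: "0 < m" by simp
    have hd: "higher_diff_at m (D 1) x (\<lambda>k. D (Suc k))" using higher_diff_shift[OF Suc.prems(1) m0] .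
    note IH = Suc.IH[OF hd m0]
    from Suc.prems(1) obtain U where U: "open U" "x \<in> U"
      and Ud: "\<forall>k. Suc k < Suc m \<longrightarrow> (\<forall>y\<in>U. (D k has_vector_derivative D (Suc k) y) (at y))"
      and D0: "D 0 = f" unfolding higher_diff_at_def by blast
    have fder: "(f has_vector_derivative D 1 y) (at y)" if "y \<in> U" for y
      using Ud[rule_format, of 0 y] that m0 D0 by simp
    obtain dU where "dU > 0" "ball x dU \<subseteq> U" using U open_contains_ball by blast
    show ?thesis
    proof (intro allI impI)
      fix e :: real assume "e>0"
      then obtain d1 where "d1>0" and d1: "\<forall>h. \<bar>h\<bar> < d1 \<longrightarrow>
          norm (D 1 (x+h) - (\<Sum>k\<le>m. (h^k/fact k) *\<^sub>R D (Suc k) x)) \<le> e * \<bar>h\<bar>^m"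
        using IH by blast
      define g where "g y = f (x+y) - (\<Sum>k\<le>Suc m. (y^k / fact k) *\<^sub>R D k x)" for y
      define g' where "g' y = D 1 (x+y) - (\<Sum>k\<le>m. (y^k / fact k) *\<^sub>R D (Suc k) x)" for y
      have g0: "g 0 = 0" unfolding g_def using D0 by (simp add: sum_pow0)
      have g'0: "g' 0 = 0" unfolding g'_def by (simp add: sum_pow0)
      show "\<exists>d>0. \<forall>h. \<bar>h\<bar> < d \<longrightarrow> norm (f (x+h) - (\<Sum>k\<le>Suc m. (h^k / fact k) *\<^sub>R D k x)) \<le> e * \<bar>h\<bar>^Suc m"
      proof (intro exI[of _ "min d1 dU"] conjI allI impI)
        show "0 < min d1 dU" using \<open>d1>0\<close> \<open>dU>0\<close> by simp
        fix h :: real assume h: "\<bar>h\<bar> < min d1 dU"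
        have seg: "\<bar>y\<bar> \<le> \<bar>h\<bar>" if "y \<in> closed_segment 0 h" for y
          using that by (auto simp: closed_segment_def abs_mult intro!: mult_left_le_one_le)
        have gder: "(g has_vector_derivative g' y) (at y within closed_segment 0 h)"
          if "y \<in> closed_segment 0 h" for y
        proof -
          have "x + y \<in> U" using seg[OF that] h \<open>ball x dU \<subseteq> U\<close> by (auto simp: dist_real_def)
          then have "(f has_vector_derivative D 1 (x+y)) (at (x+y))" by (rule fder)
          moreover have "((\<lambda>y. x + y) has_vector_derivative 1) (at y)"
            using has_vector_derivative_add[OF has_vector_derivative_const has_vector_derivative_id, of x]
            by simp
          ultimately have "((\<lambda>y. f (x+y)) has_vector_derivative D 1 (x+y)) (at y)"
            using vector_diff_chain_at[of "\<lambda>y. x + y" 1 y f "D 1 (x+y)"]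
            by (simp add: o_def)
          then have "(g has_vector_derivative g' y) (at y)" unfolding g_def[abs_def] g'_def
            by (rule has_vector_derivative_diff[OF _ poly_vec_deriv])
          then show ?thesis by (rule has_vector_derivative_at_within)
        qed
        have bnd: "norm (g' y - g' 0) \<le> e * \<bar>h\<bar>^m" if "y \<in> closed_segment 0 h" for y
        proof -
          have "norm (g' y) \<le> e * \<bar>y\<bar>^m" using d1[rule_format, of y] seg[OF that] h unfolding g'_def by simp
          moreover have "\<bar>y\<bar>^m \<le> \<bar>h\<bar>^m" using seg[OF that] by (simp add: power_mono)
          ultimately show ?thesis using \<open>e>0\<close> g'0
            by (metis diff_zero dual_order.trans mult_le_cancel_left_pos)
        qed
        have "norm (g h - g 0 - (h - 0) *\<^sub>R g' 0) \<le> norm (h - 0) * (e * \<bar>h\<bar>^m)"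
          by (rule vector_differentiable_bound_linearization[where S="closed_segment 0 h" and f=g and f'=g']) (use gder bnd in auto)
        then have "norm (g h) \<le> e * \<bar>h\<bar> ^ Suc m" using g0 g'0 by (simp add: mult_ac)
        then show "norm (f (x+h) - (\<Sum>k\<le>Suc m. (h^k / fact k) *\<^sub>R D k x)) \<le> e * \<bar>h\<bar>^Suc m"
          by (simp add: g_def)
      qed
    qed
  qed

qed
lemma sum_pow0_real: "(\<Sum>k\<le>m. c k * (0::real)^k) = c 0"
  by (induction m) auto

lemma poly_small_zero:
  fixes c :: "nat \<Rightarrow> real"
  assumes "\<forall>e>0. \<exists>d>0. \<forall>r. 0 < \<bar>r\<bar> \<and> \<bar>r\<bar> < d \<longrightarrow> \<bar>\<Sum>k\<le>n. c k * r^k\<bar> \<le> e * \<bar>r\<bar>^n"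
  shows "\<forall>k\<le>n. c k = 0"
  using assms
proof (induction n arbitrary: c)
  case 0
  have "\<bar>c 0\<bar> \<le> 0 + e" if e: "e>0" for e
  proof -
    obtain d where "d>0" and d: "\<forall>r. 0 < \<bar>r\<bar> \<and> \<bar>r\<bar> < d \<longrightarrow> \<bar>\<Sum>k\<le>0. c k * r^k\<bar> \<le> e * \<bar>r\<bar>^0"
      using 0 e by blast
    then show ?thesis using d[rule_format, of "d/2"] by simp
  qed
  then have "\<bar>c 0\<bar> \<le> 0" by (rule field_le_epsilon)
  then show ?case by simp
next
  case (Suc n)
  define p where "p r = (\<Sum>k\<le>Suc n. c k * r^k)" for r :: real
  have "isCont p 0" unfolding p_def by (intro continuous_intros)
  then have lim1: "(p \<longlongrightarrow> c 0) (at 0)"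
    by (simp add: isCont_def p_def sum_pow0_real del: sum.atMost_Suc)
  have lim2: "(p \<longlongrightarrow> 0) (at 0)"
  proof -
    obtain d where "d>0" and d: "\<forall>r. 0 < \<bar>r\<bar> \<and> \<bar>r\<bar> < d \<longrightarrow> \<bar>p r\<bar> \<le> 1 * \<bar>r\<bar>^Suc n"
      using Suc.prems[rule_format, of 1] unfolding p_def by auto
    have "eventually (\<lambda>r. norm (p r) \<le> \<bar>r\<bar>^Suc n) (at 0)"
      unfolding eventually_at using \<open>d>0\<close> d by (auto simp: dist_real_def)
    moreover have "((\<lambda>r::real. \<bar>r\<bar>^Suc n) \<longlongrightarrow> 0) (at 0)"
      by (intro tendsto_eq_intros) auto
    ultimately show ?thesis by (rule Lim_null_comparison)
  qed
  have c0: "c 0 = 0" using tendsto_unique[OF _ lim1 lim2] by simp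
  define c' where "c' k = c (Suc k)" for k
  have "\<forall>e>0. \<exists>d>0. \<forall>r. 0 < \<bar>r\<bar> \<and> \<bar>r\<bar> < d \<longrightarrow> \<bar>\<Sum>k\<le>n. c' k * r^k\<bar> \<le> e * \<bar>r\<bar>^n"
  proof (intro allI impI)
    fix e :: real assume "e>0"
    then obtain d where "d>0" and d: "\<forall>r. 0 < \<bar>r\<bar> \<and> \<bar>r\<bar> < d \<longrightarrow> \<bar>\<Sum>k\<le>Suc n. c k * r^k\<bar> \<le> e * \<bar>r\<bar>^Suc n"
      using Suc.prems by blast
    show "\<exists>d>0. \<forall>r. 0 < \<bar>r\<bar> \<and> \<bar>r\<bar> < d \<longrightarrow> \<bar>\<Sum>k\<le>n. c' k * r^k\<bar> \<le> e * \<bar>r\<bar>^n"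
    proof (intro exI[of _ d] conjI allI impI)
      fix r :: real assume r: "0 < \<bar>r\<bar> \<and> \<bar>r\<bar> < d"
      have eq: "(\<Sum>k\<le>Suc n. c k * r^k) = r * (\<Sum>k\<le>n. c' k * r^k)"
        unfolding sum.atMost_Suc_shift using c0 by (simp add: c'_def sum_distrib_left mult_ac)
      have "\<bar>\<Sum>k\<le>Suc n. c k * r^k\<bar> \<le> e * \<bar>r\<bar>^Suc n" using d r by blast
      then have "\<bar>r\<bar> * \<bar>\<Sum>k\<le>n. c' k * r^k\<bar> \<le> \<bar>r\<bar> * (e * \<bar>r\<bar>^n)"
        unfolding eq by (simp add: abs_mult mult_ac)
      then show "\<bar>\<Sum>k\<le>n. c' k * r^k\<bar> \<le> e * \<bar>r\<bar>^n" using r by simp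
    qed (fact)
  qed
  then have "\<forall>k\<le>n. c' k = 0" by (rule Suc.IH)
  show ?case
  proof (intro allI impI)
    fix k assume "k \<le> Suc n"
    show "c k = 0"
    proof (cases k)
      case 0 then show ?thesis using c0 by simp
    next
      case (Suc j) then show ?thesis using \<open>k \<le> Suc n\<close> \<open>\<forall>k\<le>n. c' k = 0\<close> by (auto simp: c'_def)
    qed
  qed
qed

lemma nondeg_geom:
  fixes \<phi> :: "real \<Rightarrow> real^'n::finite"
  assumes nd: "nondeg_at \<phi> \<Omega> s"
    and U: "open U" "s \<in> U" "continuous_on U \<phi>"
  obtains \<rho> D' c \<delta> where "higher_diff_at (CARD('n) - 1) \<rho> 0 D'"
     "span {D' k 0 | k. k \<le> CARD('n) - 1} = UNIV" "c > 0" "\<delta> > 0"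
     "\<forall>r. \<bar>r\<bar> < \<delta> \<longrightarrow> (\<exists>x. \<rho> r = \<phi> x \<and> \<bar>x - s\<bar> \<le> \<bar>r\<bar> / c)"
proof -
  define d0 where "d0 = vector_derivative \<phi> (at s)"
  from nd have dif: "\<phi> differentiable (at s)" and d0nz: "d0 \<noteq> 0"
    and ex: "\<exists>L v \<Omega>1 r0 \<rho>. subspace L \<and> \<phi> s \<in> L \<and> span {d0} \<inter> L = {0} \<and>
        {x + y | x y. x \<in> span {d0} \<and> y \<in> L} = UNIV \<and>
        v \<in> span {d0} \<and> v \<noteq> 0 \<and> open \<Omega>1 \<and> s \<in> \<Omega>1 \<and> \<Omega>1 \<subseteq> \<Omega> \<and> 0 < r0 \<and>
        (\<forall>r. \<bar>r\<bar> < r0 \<longrightarrow> \<phi> ` \<Omega>1 \<inter> (\<lambda>l. r *\<^sub>R v + l) ` L = {\<rho> r}) \<and> curve_nondeg_at \<rho> 0"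
    unfolding nondeg_at_def d0_def Let_def by auto
  then obtain L v \<Omega>1 r0 \<rho> where L: "subspace L" "\<phi> s \<in> L" "span {d0} \<inter> L = {0}"
     and TL: "{x + y | x y. x \<in> span {d0} \<and> y \<in> L} = UNIV"
     and v: "v \<in> span {d0}" "v \<noteq> 0" and \<Omega>1: "open \<Omega>1" "s \<in> \<Omega>1" and r0: "0 < r0"
     and inter: "\<forall>r. \<bar>r\<bar> < r0 \<longrightarrow> \<phi> ` \<Omega>1 \<inter> (\<lambda>l. r *\<^sub>R v + l) ` L = {\<rho> r}"
     and cn: "curve_nondeg_at \<rho> 0" by blast
  from cn obtain D' where hd\<rho>: "higher_diff_at (CARD('n) - 1) \<rho> 0 D'"
    and sp\<rho>: "span {D' k 0 | k. k \<le> CARD('n) - 1} = UNIV"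
    unfolding curve_nondeg_at_def by blast
  have der: "(\<phi> has_vector_derivative d0) (at s)"
    using dif unfolding d0_def by (simp add: vector_derivative_works)
  obtain a where a: "v = a *\<^sub>R d0" using v(1) by (auto simp: span_singleton)
  have "a \<noteq> 0" using a v(2) by auto
  have vL: "v \<notin> L" using L(3) v by auto
  have "span L = L" using L(1) by simp
  then have "span L \<noteq> UNIV" using vL by (metis UNIV_I)
  then obtain u0 where u0: "u0 \<noteq> 0" "\<forall>x\<in>span L. u0 \<bullet> x = 0"
    using span_not_UNIV_orthogonal by blast
  then have u0L: "\<forall>x\<in>L. u0 \<bullet> x = 0" using \<open>span L = L\<close> by simp
  have decomp: "\<exists>b l. y = b *\<^sub>R d0 + l \<and> l \<in> L" for y
  proof -
    have "y \<in> {x + y | x y. x \<in> span {d0} \<and> y \<in> L}" using TL by simp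
    then show ?thesis by (auto simp: span_singleton)
  qed
  have uv: "u0 \<bullet> v \<noteq> 0"
  proof
    assume "u0 \<bullet> v = 0"
    then have ud: "u0 \<bullet> d0 = 0" using a \<open>a\<noteq>0\<close> by simp
    obtain b l where "u0 = b *\<^sub>R d0 + l" "l \<in> L" using decomp by blast
    then have "u0 \<bullet> u0 = 0" using ud u0L by (simp add: inner_add_right)
    then show False using u0 by simp
  qed
  define w where "w = inverse (u0 \<bullet> v) *\<^sub>R u0"
  have wL: "\<forall>x\<in>L. w \<bullet> x = 0" using u0L by (simp add: w_def)
  have wv: "w \<bullet> v = 1" using uv by (simp add: w_def)
  define \<alpha> where "\<alpha> = w \<bullet> d0"
  have a\<alpha>: "a * \<alpha> = 1" using wv a by (simp add: \<alpha>_def)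
  then have "\<alpha> \<noteq> 0" by auto
  have kerL: "y \<in> L" if "w \<bullet> y = 0" for y
  proof -
    obtain b l where bl: "y = b *\<^sub>R d0 + l" "l \<in> L" using decomp by blast
    then have "b * \<alpha> = 0" using that wL by (simp add: inner_add_right \<alpha>_def)
    then have "b = 0" using \<open>\<alpha> \<noteq> 0\<close> by simp
    then show ?thesis using bl by simp
  qed
  define F where "F x = w \<bullet> \<phi> x" for x
  have Fder: "(F has_vector_derivative \<alpha>) (at s)"
    unfolding F_def[abs_def] \<alpha>_def
    by (rule bounded_linear.has_vector_derivative[OF bounded_linear_inner_right der])
  have Fs: "F s = 0" using L(2) wL by (simp add: F_def)
  define c where "c = \<bar>\<alpha>\<bar> / 2"
  have "c > 0" using \<open>\<alpha> \<noteq> 0\<close> by (simp add: c_def)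
  from Fder have "(F has_derivative (\<lambda>h. h *\<^sub>R \<alpha>)) (at s)" by (simp add: has_vector_derivative_def)
  then obtain \<delta>1 where "\<delta>1 > 0" and \<delta>1: "\<forall>y. norm (y - s) < \<delta>1 \<longrightarrow> norm (F y - F s - (y - s) *\<^sub>R \<alpha>) \<le> c * norm (y - s)"
    using \<open>c > 0\<close> unfolding has_derivative_at_alt by blast
  have lin: "\<bar>F y - (y - s) * \<alpha>\<bar> \<le> c * \<bar>y - s\<bar>" if "\<bar>y - s\<bar> < \<delta>1" for y
    using \<delta>1 that Fs by simp
  obtain dU where "dU > 0" "ball s dU \<subseteq> U" using U open_contains_ball by blast
  obtain dO where "dO > 0" "ball s dO \<subseteq> \<Omega>1" using \<Omega>1 open_contains_ball by blast
  define \<delta>' where "\<delta>' = min \<delta>1 (min dU dO) / 2"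
  have "\<delta>' > 0" "\<delta>' < \<delta>1" "\<delta>' < dU" "\<delta>' < dO"
    using \<open>\<delta>1 > 0\<close> \<open>dU > 0\<close> \<open>dO > 0\<close> by (auto simp: \<delta>'_def)
  have sub: "{s-\<delta>'..s+\<delta>'} \<subseteq> ball s dU" using \<open>\<delta>' < dU\<close> by (auto simp: dist_real_def)
  have "continuous_on {s-\<delta>'..s+\<delta>'} \<phi>"
    using continuous_on_subset[OF U(3)] sub \<open>ball s dU \<subseteq> U\<close> by blast
  then have Icont: "continuous_on {s-\<delta>'..s+\<delta>'} F"
    unfolding F_def[abs_def] by (intro continuous_intros)
  define \<delta> where "\<delta> = min r0 (c * \<delta>')"
  have "\<delta> > 0" using r0 \<open>c>0\<close> \<open>\<delta>'>0\<close> by (simp add: \<delta>_def)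
  show ?thesis
  proof (rule that[OF hd\<rho> sp\<rho> \<open>c>0\<close> \<open>\<delta>>0\<close>], intro allI impI)
    fix r :: real assume r: "\<bar>r\<bar> < \<delta>"
    have l1: "\<bar>F (s+\<delta>') - \<delta>' * \<alpha>\<bar> \<le> c * \<delta>'" using lin[of "s+\<delta>'"] \<open>\<delta>' < \<delta>1\<close> \<open>\<delta>'>0\<close> by simp
    have l2: "\<bar>F (s-\<delta>') + \<delta>' * \<alpha>\<bar> \<le> c * \<delta>'" using lin[of "s-\<delta>'"] \<open>\<delta>' < \<delta>1\<close> \<open>\<delta>'>0\<close> by simp
    have rc: "\<bar>r\<bar> < c * \<delta>'" using r by (simp add: \<delta>_def)
    obtain x where x: "s-\<delta>' \<le> x" "x \<le> s+\<delta>'" "F x = r"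
    proof (cases "\<alpha> > 0")
      case True
      then have ceq: "c * \<delta>' = \<delta>' * \<alpha> / 2" by (simp add: c_def)
      have "F (s-\<delta>') \<le> r" "r \<le> F (s+\<delta>')" using l1 l2 rc ceq unfolding abs_le_iff abs_less_iff by linarith+
      then show ?thesis using IVT'[OF _ _ _ Icont] \<open>\<delta>'>0\<close> that by force
    next
      case False
      then have "\<alpha> < 0" using \<open>\<alpha> \<noteq> 0\<close> by simp
      then have ceq: "c * \<delta>' = - (\<delta>' * \<alpha>) / 2" by (simp add: c_def)
      have "F (s+\<delta>') \<le> r" "r \<le> F (s-\<delta>')" using l1 l2 rc ceq unfolding abs_le_iff abs_less_iff by linarith+
      then show ?thesis using IVT2'[OF _ _ _ Icont] \<open>\<delta>'>0\<close> that by force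
    qed
    have xs: "\<bar>x - s\<bar> \<le> \<delta>'" using x by simp
    then have "\<bar>F x - (x - s) * \<alpha>\<bar> \<le> c * \<bar>x - s\<bar>" using lin \<open>\<delta>' < \<delta>1\<close> by simp
    moreover have "\<bar>(x - s) * \<alpha>\<bar> = 2 * (c * \<bar>x - s\<bar>)" by (simp add: c_def abs_mult)
    ultimately have "c * \<bar>x - s\<bar> \<le> \<bar>r\<bar>" using x(3) by (smt (verit))
    then have xr: "\<bar>x - s\<bar> \<le> \<bar>r\<bar> / c" using \<open>c>0\<close> by (simp add: field_simps)
    have "x \<in> \<Omega>1" using xs \<open>\<delta>' < dO\<close> \<open>ball s dO \<subseteq> \<Omega>1\<close> by (auto simp: dist_real_def)
    have "w \<bullet> (\<phi> x - r *\<^sub>R v) = 0" using x(3) wv by (simp add: F_def inner_diff_right)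
    then have "\<phi> x - r *\<^sub>R v \<in> L" by (rule kerL)
    then have "\<phi> x \<in> (\<lambda>l. r *\<^sub>R v + l) ` L" by (intro image_eqI[of _ _ "\<phi> x - r *\<^sub>R v"]) auto
    moreover have "\<phi> x \<in> \<phi> ` \<Omega>1" using \<open>x \<in> \<Omega>1\<close> by simp
    moreover have "\<bar>r\<bar> < r0" using r by (simp add: \<delta>_def)
    ultimately have "\<phi> x = \<rho> r" using inter by blast
    then show "\<exists>x. \<rho> r = \<phi> x \<and> \<bar>x - s\<bar> \<le> \<bar>r\<bar> / c" using xr by metis
  qed
qed

lemma nondeg_span:
  fixes \<phi> :: "real \<Rightarrow> real^'n::finite"
  assumes N2: "CARD('n) \<ge> 2" and hd: "higher_diff_at (CARD('n)) \<phi> s D" and nd: "nondeg_at \<phi> \<Omega> s"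
  shows "span {D k s | k. k \<le> CARD('n) - 1} = UNIV"
proof (rule ccontr)
  define n where "n = CARD('n) - 1"
  have n1: "n \<ge> 1" "CARD('n) = Suc n" using N2 by (auto simp: n_def)
  assume "span {D k s | k. k \<le> CARD('n) - 1} \<noteq> UNIV"
  then obtain u where u: "u \<noteq> 0" "\<forall>x\<in>span {D k s | k. k \<le> CARD('n) - 1}. u \<bullet> x = 0"
    using span_not_UNIV_orthogonal by blast
  have uD: "u \<bullet> D k s = 0" if "k \<le> n" for k
  proof -
    have "D k s \<in> span {D k s | k. k \<le> CARD('n) - 1}" using that by (intro span_base) (auto simp: n_def)
    then show ?thesis using u(2) by blast
  qed
  from hd obtain U where U: "open U" "s \<in> U"
    and Uder: "\<forall>k. Suc k < CARD('n) \<longrightarrow> (\<forall>y\<in>U. (D k has_vector_derivative D (Suc k) y) (at y))"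
    and D0: "D 0 = \<phi>"
    unfolding higher_diff_at_def by blast
  have "continuous_on U \<phi>"
  proof (rule continuous_at_imp_continuous_on, intro ballI)
    fix y assume "y \<in> U"
    then have "(\<phi> has_vector_derivative D 1 y) (at y)" using Uder[rule_format, of 0 y] N2 D0 by simp
    then show "isCont \<phi> y" by (rule has_vector_derivative_continuous)
  qed
  then obtain \<rho> D' c \<delta> where hd\<rho>: "higher_diff_at (CARD('n) - 1) \<rho> 0 D'"
     and sp\<rho>: "span {D' k 0 | k. k \<le> CARD('n) - 1} = UNIV" and "c > 0" "\<delta> > 0"
     and param: "\<forall>r. \<bar>r\<bar> < \<delta> \<longrightarrow> (\<exists>x. \<rho> r = \<phi> x \<and> \<bar>x - s\<bar> \<le> \<bar>r\<bar> / c)"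
    using nondeg_geom[OF nd U(1,2)] by blast
  have hdn: "higher_diff_at n \<phi> s D" using higher_diff_mono hd n1(2) by metis
  have T\<phi>: "\<forall>e>0. \<exists>d>0. \<forall>h. \<bar>h\<bar> < d \<longrightarrow>
           norm (\<phi> (s+h) - (\<Sum>k\<le>n. (h^k / fact k) *\<^sub>R D k s)) \<le> e * \<bar>h\<bar>^n"
    using taylor_peano[OF hdn] n1 by simp
  have T\<rho>: "\<forall>e>0. \<exists>d>0. \<forall>h. \<bar>h\<bar> < d \<longrightarrow>
           norm (\<rho> (0+h) - (\<Sum>k\<le>n. (h^k / fact k) *\<^sub>R D' k 0)) \<le> e * \<bar>h\<bar>^n"
    using taylor_peano[OF hd\<rho>[folded n_def]] n1 by simp
  define cc where "cc k = (u \<bullet> D' k 0) / fact k" for k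
  have "\<forall>k\<le>n. cc k = 0"
  proof (rule poly_small_zero, intro allI impI)
    fix e :: real assume "e > 0"
    define e' where "e' = e / (norm u * (1 + inverse c ^ n))"
    have "norm u > 0" using u by simp
    have "1 + inverse c ^ n > 0" using \<open>c > 0\<close> by (simp add: add_pos_nonneg)
    then have "e' > 0" using \<open>e>0\<close> \<open>norm u > 0\<close> by (simp add: e'_def)
    obtain d1 where "d1 > 0" and d1: "\<forall>h. \<bar>h\<bar> < d1 \<longrightarrow>
           norm (\<phi> (s+h) - (\<Sum>k\<le>n. (h^k / fact k) *\<^sub>R D k s)) \<le> e' * \<bar>h\<bar>^n"
      using T\<phi> \<open>e'>0\<close> by blast
    obtain d2 where "d2 > 0" and d2: "\<forall>h. \<bar>h\<bar> < d2 \<longrightarrow>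
           norm (\<rho> (0+h) - (\<Sum>k\<le>n. (h^k / fact k) *\<^sub>R D' k 0)) \<le> e' * \<bar>h\<bar>^n"
      using T\<rho> \<open>e'>0\<close> by blast
    show "\<exists>d>0. \<forall>r. 0 < \<bar>r\<bar> \<and> \<bar>r\<bar> < d \<longrightarrow> \<bar>\<Sum>k\<le>n. cc k * r^k\<bar> \<le> e * \<bar>r\<bar>^n"
    proof (intro exI[of _ "min \<delta> (min d2 (c*d1))"] conjI allI impI)
      show "0 < min \<delta> (min d2 (c*d1))" using \<open>\<delta>>0\<close> \<open>d2>0\<close> \<open>d1>0\<close> \<open>c>0\<close> by simp
      fix r :: real assume r: "0 < \<bar>r\<bar> \<and> \<bar>r\<bar> < min \<delta> (min d2 (c*d1))"
      obtain x where x: "\<rho> r = \<phi> x" "\<bar>x - s\<bar> \<le> \<bar>r\<bar> / c" using param r by auto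
      have "\<bar>r\<bar> / c < d1" using r \<open>c>0\<close> by (simp add: field_simps)
      then have "\<bar>x - s\<bar> < d1" using x(2) by linarith
      then have n\<phi>: "norm (\<phi> x - (\<Sum>k\<le>n. ((x-s)^k / fact k) *\<^sub>R D k s)) \<le> e' * \<bar>x - s\<bar>^n"
        using d1[rule_format, of "x - s"] by simp
      have "u \<bullet> (\<Sum>k\<le>n. ((x-s)^k / fact k) *\<^sub>R D k s) = 0"
        by (simp add: inner_sum_right uD)
      then have "\<bar>u \<bullet> \<phi> x\<bar> = \<bar>u \<bullet> (\<phi> x - (\<Sum>k\<le>n. ((x-s)^k / fact k) *\<^sub>R D k s))\<bar>"
        by (simp add: inner_diff_right)
      also have "\<dots> \<le> norm u * norm (\<phi> x - (\<Sum>k\<le>n. ((x-s)^k / fact k) *\<^sub>R D k s))"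
        by (rule Cauchy_Schwarz_ineq2)
      also have "\<dots> \<le> norm u * (e' * \<bar>x - s\<bar>^n)"
        using n\<phi> by (simp add: mult_left_mono)
      also have "\<dots> \<le> norm u * (e' * (inverse c ^ n * \<bar>r\<bar>^n))"
      proof -
        have "\<bar>x - s\<bar>^n \<le> (\<bar>r\<bar> / c)^n" using x(2) by (simp add: power_mono)
        also have "\<dots> = inverse c ^ n * \<bar>r\<bar>^n" by (simp add: field_simps power_divide)
        finally show ?thesis using \<open>e'>0\<close> by (simp add: mult_left_mono)
      qed
      finally have A: "\<bar>u \<bullet> \<rho> r\<bar> \<le> norm u * (e' * (inverse c ^ n * \<bar>r\<bar>^n))" using x(1) by simp
      have sumeq: "(\<Sum>k\<le>n. cc k * r^k) = u \<bullet> (\<Sum>k\<le>n. (r^k / fact k) *\<^sub>R D' k 0)"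
        by (simp add: inner_sum_right cc_def field_simps)
      have "\<bar>u \<bullet> \<rho> r - (\<Sum>k\<le>n. cc k * r^k)\<bar> = \<bar>u \<bullet> (\<rho> r - (\<Sum>k\<le>n. (r^k / fact k) *\<^sub>R D' k 0))\<bar>"
        by (simp add: sumeq inner_diff_right)
      also have "\<dots> \<le> norm u * norm (\<rho> r - (\<Sum>k\<le>n. (r^k / fact k) *\<^sub>R D' k 0))"
        by (rule Cauchy_Schwarz_ineq2)
      also have "\<dots> \<le> norm u * (e' * \<bar>r\<bar>^n)"
        using d2[rule_format, of r] r by (simp add: mult_left_mono)
      finally have B: "\<bar>u \<bullet> \<rho> r - (\<Sum>k\<le>n. cc k * r^k)\<bar> \<le> norm u * (e' * \<bar>r\<bar>^n)" .
      have "\<bar>\<Sum>k\<le>n. cc k * r^k\<bar> \<le> norm u * (e' * (inverse c ^ n * \<bar>r\<bar>^n)) + norm u * (e' * \<bar>r\<bar>^n)"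
        using A B by linarith
      also have "\<dots> = e' * (norm u * (1 + inverse c ^ n)) * \<bar>r\<bar>^n" by (simp add: algebra_simps)
      also have "\<dots> = e * \<bar>r\<bar>^n"
        using \<open>norm u > 0\<close> \<open>1 + inverse c ^ n > 0\<close> by (simp add: e'_def)
      finally show "\<bar>\<Sum>k\<le>n. cc k * r^k\<bar> \<le> e * \<bar>r\<bar>^n" .
    qed
  qed
  then have "{D' k 0 | k. k \<le> CARD('n) - 1} \<subseteq> {x. u \<bullet> x = 0}"
    by (auto simp: cc_def n_def)
  then have "span {D' k 0 | k. k \<le> CARD('n) - 1} \<subseteq> {x. u \<bullet> x = 0}"
    by (rule span_minimal[OF _ subspace_hyperplane])
  then have "u \<in> {x. u \<bullet> x = 0}" using sp\<rho> by (metis UNIV_I subsetD)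
  then have "u \<bullet> u = 0" by simp
  then show False using u(1) by simp
qed

lemma row_mult: "((A::real^'n^'m) ** (C::real^'p^'n)) $ i = A $ i v* C"
  by (simp add: matrix_matrix_mult_def vector_matrix_mult_def vec_eq_iff mult.commute)

lemma vm_sum: "(x::real^'n) v* (W::real^'p^'n) = (\<Sum>j\<in>UNIV. x $ j *\<^sub>R W $ j)"
  by (simp add: vector_matrix_mult_def vec_eq_iff sum_component mult.commute)

lemma mat1_row_mult: "(mat 1 :: real^'n^'n) $ i v* (W::real^'p^'n) = W $ i"
  using row_mult[of "mat 1" W i] by simp

lemma matrix_eq_rows: "(\<And>x. x v* (P::real^'n^'m) = 0) \<Longrightarrow> P = 0"
proof -
  assume h: "\<And>x. x v* P = 0"
  have "P $ i $ j = (axis i 1 v* P) $ j" for i j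
  proof -
    have "(axis i 1 v* P) $ j = (\<Sum>k\<in>UNIV. (if k = i then 1 else 0) * P $ k $ j)"
      unfolding vector_matrix_mult_def axis_def by simp
    also have "\<dots> = (\<Sum>k\<in>UNIV. if k = i then P $ k $ j else 0)" by (rule sum.cong) auto
    also have "\<dots> = P $ i $ j" by simp
    finally show ?thesis by simp
  qed
  then show "P = 0" using h by (simp add: vec_eq_iff)
qed

lemma indep_inj:
  fixes v :: "nat \<Rightarrow> real^'n::finite"
  assumes card: "CARD('n) = Suc n" and sp: "span (v ` {..n}) = UNIV"
  shows "independent (v ` {..n})" "inj_on v {..n}"
proof -
  have dimU: "dim (UNIV :: (real^'n) set) = Suc n" using card by simp
  have c: "card (v ` {..n}) \<le> Suc n" using card_image_le[of "{..n}" v] by simp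
  show ind: "independent (v ` {..n})"
    by (rule card_le_dim_spanning[of _ UNIV]) (use sp c dimU in auto)
  then have "dim (span (v ` {..n})) = card (v ` {..n})" by (rule dim_span_eq_card_independent)
  then have "card (v ` {..n}) = card {..n}" using sp dimU by simp
  then show "inj_on v {..n}" by (intro eq_card_imp_inj_on) simp_all
qed

lemma exists_g:
  fixes v :: "nat \<Rightarrow> real^'n::finite"
  assumes ind: "independent (v ` {..n})" and inj: "inj_on v {..n}"
  obtains g where "linear g" "g (v 0) = 0" "\<forall>k<n. g (v (Suc k)) = v k"
proof -
  define f where "f x = (let k = inv_into {..n} v x in if k = 0 then 0 else v (k - 1))" for x
  obtain g where lin: "linear g" and gf: "\<forall>x\<in>v ` {..n}. g x = f x"
    using linear_independent_extend[OF ind] by blast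
  have "g (v 0) = 0" using gf inv_into_f_f[OF inj, of 0] by (simp add: f_def)
  moreover have "\<forall>k<n. g (v (Suc k)) = v k"
  proof (intro allI impI)
    fix k assume "k < n"
    then have "Suc k \<in> {..n}" by simp
    then show "g (v (Suc k)) = v k" using gf inv_into_f_f[OF inj, of "Suc k"] by (simp add: f_def)
  qed
  ultimately show ?thesis using that lin by blast
qed

lemma nilp:
  fixes v :: "nat \<Rightarrow> real^'n::finite" and B :: "real^'n^'n"
  assumes lin: "linear g" and B: "\<And>x. x v* B = g x" and sp: "span (v ` {..n}) = UNIV"
    and g0: "g (v 0) = 0" and gs: "\<forall>k<n. g (v (Suc k)) = v k"
  shows "nilpotent_mat B"
proof -
  have P: "x v* (((**) B)^^k) (mat 1) = (g^^k) x" for k x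
  proof (induction k arbitrary: x)
    case 0 then show ?case by simp
  next
    case (Suc k)
    have "x v* (((**) B)^^Suc k) (mat 1) = (x v* B) v* (((**) B)^^k) (mat 1)"
      by (simp add: vector_matrix_mul_assoc)
    also have "\<dots> = (g^^k) (g x)" using Suc B by simp
    also have "(g^^k) (g x) = (g^^Suc k) x" by (simp only: funpow_Suc_right comp_def)
    finally show ?case .
  qed
  have gl: "linear (g^^k)" for k
  proof (induction k)
    case 0 show ?case using linear_ident by (simp add: id_def)
  next
    case (Suc k) then show ?case using linear_compose[OF Suc.IH lin] by (simp add: o_def)
  qed
  have vk: "(g^^j) (v k) = (if j \<le> k then v (k - j) else 0)" if "k \<le> n" for j k
    using that
  proof (induction j arbitrary: k)
    case 0 then show ?case by simp
  next
    case (Suc j)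
    have "(g^^Suc j) (v k) = (g^^j) (g (v k))" by (simp only: funpow_Suc_right comp_def)
    also have "\<dots> = (if Suc j \<le> k then v (k - Suc j) else 0)"
    proof (cases k)
      case 0 then show ?thesis using g0 linear_0[OF gl] by simp
    next
      case (Suc k')
      then have "g (v k) = v k'" using gs Suc.prems by simp
      then show ?thesis using Suc.IH[of k'] Suc.prems \<open>k = Suc k'\<close> by simp
    qed
    finally show ?case .
  qed
  have "(g^^Suc n) x = 0" for x
  proof (rule linear_eq_0_on_span[OF gl])
    show "x \<in> span (v ` {..n})" using sp by simp
    fix y assume "y \<in> v ` {..n}"
    then obtain k where "k \<le> n" "y = v k" by auto
    then show "(g^^Suc n) y = 0" using vk[of k "Suc n"] by (simp del: funpow.simps)
  qed
  then have "(((**) B)^^Suc n) (mat 1) = 0" using P by (intro matrix_eq_rows) (simp del: funpow.simps)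
  then show ?thesis unfolding nilpotent_mat_def by blast
qed

lemma rank_g:
  fixes v :: "nat \<Rightarrow> real^'n::finite" and B :: "real^'n^'n"
  assumes lin: "linear g" and B: "\<And>x. x v* B = g x" and sp: "span (v ` {..n}) = UNIV"
    and ind: "independent (v ` {..n})" and inj: "inj_on v {..n}"
    and g0: "g (v 0) = 0" and gs: "\<forall>k<n. g (v (Suc k)) = v k"
  shows "rank B = n"
proof -
  have "rank B = rank (transpose B)" by (simp add: rank_transpose)
  also have "\<dots> = dim (range g)" unfolding rank_dim_range using B by simp
  also have "range g = span (g ` v ` {..n})"
    using span_linear_image[OF lin, of "v ` {..n}"] sp by simp
  also have "g ` v ` {..n} = insert 0 (v ` {..<n})"
  proof
    show "g ` v ` {..n} \<subseteq> insert 0 (v ` {..<n})"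
    proof
      fix y assume "y \<in> g ` v ` {..n}"
      then obtain k where k: "k \<le> n" "y = g (v k)" by auto
      show "y \<in> insert 0 (v ` {..<n})"
      proof (cases k)
        case 0 then show ?thesis using k g0 by simp
      next
        case (Suc k') then show ?thesis using k gs by auto
      qed
    qed
    show "insert 0 (v ` {..<n}) \<subseteq> g ` v ` {..n}"
    proof
      fix y assume "y \<in> insert 0 (v ` {..<n})"
      then consider "y = 0" | k where "k < n" "y = v k" by auto
      then show "y \<in> g ` v ` {..n}"
      proof cases
        case 1 then show ?thesis using g0 by (metis atMost_iff image_eqI le0)
      next
        case 2 then show ?thesis using gs
          by (metis Suc_leI atMost_iff image_eqI)
      qed
    qed
  qed
  also have "dim (span (insert 0 (v ` {..<n}))) = card (v ` {..<n})"
  proof -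
    have "independent (v ` {..<n})" by (rule independent_mono[OF ind]) auto
    then show ?thesis by (simp add: dim_eq_card_independent)
  qed
  also have "\<dots> = n"
  proof -
    have "inj_on v {..<n}" using inj by (rule inj_on_subset) auto
    then show ?thesis by (simp add: card_image)
  qed
  finally show ?thesis .
qed

lemma det_shift:
  fixes v :: "nat \<Rightarrow> real^('n::{finite,wellorder})" and B :: "real^('n::{finite,wellorder})^('n::{finite,wellorder})"
  assumes card: "CARD('n) = Suc n" and sp: "span (v ` {..n}) = UNIV"
    and B0: "v 0 v* B = 0" and Bs: "\<forall>k<n. v (Suc k) v* B = v k"
  shows "det (mat 1 - t *\<^sub>R B) = 1"
proof -
  define idx :: "'n \<Rightarrow> nat" where "idx i = card {j. j < i}" for i
  have mono: "idx i < idx j" if "i < j" for i j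
    unfolding idx_def by (rule psubset_card_mono) (use that in \<open>auto intro: less_trans\<close>)
  have inj: "inj idx"
  proof (rule injI)
    fix i j assume "idx i = idx j"
    then show "i = j" using mono by (metis less_irrefl linorder_neqE)
  qed
  have le: "idx i \<le> n" for i
  proof -
    have "idx i < card (UNIV :: ('n::{finite,wellorder}) set)" unfolding idx_def by (rule psubset_card_mono) auto
    then show ?thesis using card by simp
  qed
  have rng: "range idx = {..n}"
  proof (rule card_subset_eq)
    show "range idx \<subseteq> {..n}" using le by auto
    show "card (range idx) = card {..n}" using card card_image[OF inj] by simp
  qed simp
  then have surj: "\<exists>i. idx i = k" if "k \<le> n" for k using that by (metis atMost_iff rangeE)
  define W where "W = (\<chi> i. v (idx i))"
  define S where "S = (\<chi> i j. if idx i = Suc (idx j) then (1::real) else 0)"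
  have "rows W = v ` {..n}"
    unfolding rows_def row_def W_def using rng by (auto simp: vec_lambda_eta) (use surj in metis)
  then have "\<exists>W'. W' ** W = mat 1" using matrix_left_invertible_span_rows sp by metis
  then have "det W \<noteq> 0" using invertible_left_inverse invertible_det_nz by metis
  have WB: "(W ** B) $ i = (S ** W) $ i" for i
  proof -
    have l: "(W ** B) $ i = v (idx i) v* B" by (simp add: row_mult W_def)
    have r: "(S ** W) $ i = (\<Sum>j\<in>UNIV. (if idx i = Suc (idx j) then 1 else 0) *\<^sub>R v (idx j))"
      by (simp add: row_mult vm_sum S_def W_def)
    show ?thesis
    proof (cases "idx i")
      case 0 then show ?thesis using l r B0 by simp
    next
      case (Suc k)
      then have "k < n" using le[of i] by simp
      then obtain j0 where j0: "idx j0 = k" using surj by (meson less_imp_le_nat)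
      have "(\<Sum>j\<in>UNIV. (if idx i = Suc (idx j) then 1 else 0) *\<^sub>R v (idx j))
            = (\<Sum>j\<in>UNIV. if j = j0 then v k else 0)"
        by (rule sum.cong) (use Suc j0 inj in \<open>auto dest: injD\<close>)
      also have "\<dots> = v k" by simp
      finally show ?thesis using l r Suc Bs \<open>k < n\<close> by simp
    qed
  qed
  have eq: "W ** (mat 1 - t *\<^sub>R B) = (mat 1 - t *\<^sub>R S) ** W"
  proof -
    have "(W ** (mat 1 - t *\<^sub>R B)) $ i = ((mat 1 - t *\<^sub>R S) ** W) $ i" for i
    proof -
      have "(W ** (mat 1 - t *\<^sub>R B)) $ i = W $ i - t *\<^sub>R (W $ i v* B)"
        by (simp add: row_mult vector_matrix_mult_diff_rdistrib vector_scaleR_matrix_ac)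
      also have "\<dots> = W $ i - t *\<^sub>R ((S ** W) $ i)" using WB[of i] by (simp add: row_mult)
      also have "\<dots> = ((mat 1 - t *\<^sub>R S) ** W) $ i"
        by (simp add: row_mult vector_matrix_mult_diff_distrib scaleR_vector_matrix_assoc mat1_row_mult)
      finally show ?thesis .
    qed
    then show ?thesis by (simp add: vec_eq_iff)
  qed
  have dS: "det (mat 1 - t *\<^sub>R S) = 1"
  proof -
    have "det (mat 1 - t *\<^sub>R S) = prod (\<lambda>i. (mat 1 - t *\<^sub>R S) $ i $ i) UNIV"
    proof (rule det_lowerdiagonal)
      fix i j :: 'n assume "i < j"
      then have "idx i < idx j" by (rule mono)
      then show "(mat 1 - t *\<^sub>R S) $ i $ j = 0" using \<open>i < j\<close> by (simp add: S_def mat_def)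
    qed
    also have "\<dots> = 1" by (simp add: S_def mat_def)
    finally show ?thesis .
  qed
  have "det W * det (mat 1 - t *\<^sub>R B) = det (mat 1 - t *\<^sub>R S) * det W"
    using arg_cong[OF eq, of det] by (simp add: det_mul)
  then show ?thesis using dS \<open>det W \<noteq> 0\<close> by simp
qed

lemma inv_props:
  fixes A :: "real^'n^'n"
  assumes "det A \<noteq> 0"
  shows "A ** matrix_inv A = mat 1" "matrix_inv A ** A = mat 1"
proof -
  have "invertible A" using assms invertible_det_nz by blast
  then have "\<exists>A'. A ** A' = mat 1 \<and> A' ** A = mat 1" unfolding invertible_def by blast
  then have "A ** matrix_inv A = mat 1 \<and> matrix_inv A ** A = mat 1"
    unfolding matrix_inv_def by (rule someI_ex)
  then show "A ** matrix_inv A = mat 1" "matrix_inv A ** A = mat 1" by auto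
qed

lemma tendsto_det:
  fixes f :: "'a \<Rightarrow> real^'n^'n"
  assumes "(f \<longlongrightarrow> A) F"
  shows "((\<lambda>x. det (f x)) \<longlongrightarrow> det A) F"
  unfolding det_def by (intro tendsto_intros tendsto_vec_nth assms)

lemma a_diag_row:
  "(a_diag r ** M) $ i = (if i = first_idx then r ^ (CARD('n) - 1) else inverse r) *\<^sub>R (M::real^'p^('n::{finite,wellorder})) $ i"
proof -
  have "(a_diag r ** M) $ i = (\<Sum>j\<in>UNIV. (a_diag r :: real^('n::{finite,wellorder})^('n::{finite,wellorder})) $ i $ j *\<^sub>R M $ j)"
    by (simp add: row_mult vm_sum)
  also have "\<dots> = (\<Sum>j\<in>UNIV. if j = i then (if i = first_idx then r ^ (CARD('n) - 1) else inverse r) *\<^sub>R M $ j else 0)"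
    by (rule sum.cong) (auto simp: a_diag_def)
  also have "\<dots> = (if i = first_idx then r ^ (CARD('n) - 1) else inverse r) *\<^sub>R M $ i" by simp
  finally show ?thesis .
qed

lemma det_a_diag:
  assumes "r > 0"
  shows "det (a_diag r :: real^('n::{finite,wellorder})^('n::{finite,wellorder})) = 1"
proof -
  have "det (a_diag r :: real^('n::{finite,wellorder})^('n::{finite,wellorder})) = prod (\<lambda>i. (a_diag r :: real^('n::{finite,wellorder})^('n::{finite,wellorder})) $ i $ i) UNIV"
    by (rule det_diagonal) (simp add: a_diag_def)
  also have "\<dots> = prod (\<lambda>i. if i = first_idx then r ^ (CARD('n) - 1) else inverse r) (UNIV :: ('n::{finite,wellorder}) set)"
    by (simp add: a_diag_def)
  also have "\<dots> = r ^ (CARD('n) - 1) * prod (\<lambda>i. if i = first_idx then r ^ (CARD('n) - 1) else inverse r) (UNIV - {first_idx :: ('n::{finite,wellorder})})"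
    by (subst prod.remove[of UNIV first_idx]) auto
  also have "prod (\<lambda>i. if i = first_idx then r ^ (CARD('n) - 1) else inverse r) (UNIV - {first_idx :: ('n::{finite,wellorder})})
        = prod (\<lambda>i. inverse r) (UNIV - {first_idx :: ('n::{finite,wellorder})})"
    by (rule prod.cong) auto
  also have "\<dots> = inverse r ^ (CARD('n) - 1)" by (simp add: card_Diff_singleton)
  also have "r ^ (CARD('n) - 1) * inverse r ^ (CARD('n) - 1) = 1"
    using assms by (simp add: power_mult_distrib[symmetric])
  finally show ?thesis .
qed

lemma rem_lim:
  fixes R :: "real \<Rightarrow> 'a::real_normed_vector"
  assumes "\<forall>e>0. \<exists>d>0. \<forall>h. \<bar>h\<bar> < d \<longrightarrow> norm (R h) \<le> e * \<bar>h\<bar>^m"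
  shows "((\<lambda>t. \<bar>t\<bar>^m *\<^sub>R R (inverse t)) \<longlongrightarrow> 0) at_infinity"
proof (rule tendstoI)
  fix e :: real assume "e > 0"
  then obtain d where "d > 0" and d: "\<forall>h. \<bar>h\<bar> < d \<longrightarrow> norm (R h) \<le> (e/2) * \<bar>h\<bar>^m"
    using assms[rule_format, of "e/2"] by auto
  show "eventually (\<lambda>t. dist (\<bar>t\<bar>^m *\<^sub>R R (inverse t)) 0 < e) at_infinity"
    unfolding eventually_at_infinity
  proof (intro exI[of _ "2/d"] allI impI)
    fix t :: real assume t: "2/d \<le> norm t"
    then have "\<bar>t\<bar> > 0" using \<open>d>0\<close> by (smt (verit) divide_pos_pos real_norm_def)
    have "\<bar>inverse t\<bar> < d"
    proof -
      have "\<bar>inverse t\<bar> = inverse \<bar>t\<bar>" by simp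
      also have "\<dots> \<le> inverse (2/d)" using t \<open>d>0\<close> by (intro le_imp_inverse_le) auto
      also have "\<dots> < d" using \<open>d>0\<close> by simp
      finally show ?thesis .
    qed
    then have "norm (R (inverse t)) \<le> (e/2) * \<bar>inverse t\<bar>^m" using d by blast
    then have "\<bar>t\<bar>^m * norm (R (inverse t)) \<le> \<bar>t\<bar>^m * ((e/2) * \<bar>inverse t\<bar>^m)"
      by (rule mult_left_mono) simp
    also have "\<dots> = e/2" using \<open>\<bar>t\<bar> > 0\<close>
      by (simp add: power_mult_distrib[symmetric] abs_inverse)
    finally show "dist (\<bar>t\<bar>^m *\<^sub>R R (inverse t)) 0 < e" using \<open>e>0\<close> by simp
  qed
qed

lemma bl_vB: "bounded_linear (\<lambda>x. x v* (Y::real^'m^'n))"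
proof -
  have "bounded_linear ((*v) (transpose Y))" by simp
  moreover have "(\<lambda>x. x v* Y) = (*v) (transpose Y)" by (rule ext) simp
  ultimately show ?thesis by simp
qed

lemma bounded_scale_zero:
  fixes f :: "'a \<Rightarrow> 'b::real_normed_vector"
  assumes "(f \<longlongrightarrow> 0) F" "\<And>t. \<bar>c t\<bar> \<le> 1"
  shows "((\<lambda>t. c t *\<^sub>R f t) \<longlongrightarrow> 0) F"
proof (rule Lim_null_comparison)
  show "eventually (\<lambda>t. norm (c t *\<^sub>R f t) \<le> norm (f t)) F"
    using assms(2) by (intro always_eventually allI) (simp add: mult_left_le_one_le)
  show "((\<lambda>t. norm (f t)) \<longlongrightarrow> 0) F" using assms(1) by (rule tendsto_norm_zero)
qed




lemma sum_vB: "(\<Sum>k\<in>A. c k *\<^sub>R x k) v* (B::real^'m^'n) = (\<Sum>k\<in>A. c k *\<^sub>R (x k v* B))"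
proof (induction A rule: infinite_finite_induct)
  case (insert a A) then show ?case by (simp add: vector_matrix_left_distrib scaleR_vector_matrix_assoc)
qed simp_all

lemma abs_inv_sgn: "(t::real) \<noteq> 0 \<Longrightarrow> \<bar>t\<bar> * inverse t = sgn t"
  by (cases "t > 0") auto


lemma first_row_identity:
  fixes v :: "nat \<Rightarrow> real^'n" and B :: "real^'n^'n"
  assumes B0: "v 0 v* B = 0" and Bs: "\<forall>k<n. v (Suc k) v* B = v k" and n1: "n \<ge> 1" and t: "t \<noteq> 0"
  shows "\<bar>t\<bar>^n *\<^sub>R ((\<Sum>k\<le>Suc n. inverse t ^ k *\<^sub>R v k) - t *\<^sub>R ((\<Sum>k\<le>Suc n. inverse t ^ k *\<^sub>R v k) v* B))
         = sgn t ^ n *\<^sub>R (v n - v (Suc n) v* B) + (sgn t ^ n * inverse t) *\<^sub>R v (Suc n)"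
proof -
  obtain m where m: "n = Suc m" using n1 by (cases n) auto
  define h where "h = inverse t"
  define P where "P = (\<Sum>k\<le>Suc n. h ^ k *\<^sub>R v k)"
  have th: "t * h = 1" using t by (simp add: h_def)
  have thk: "t * h^Suc k = h^k" for k
  proof -
    have "t * h^Suc k = (t*h) * h^k" by (simp only: power_Suc mult.assoc)
    then show ?thesis using th by simp
  qed
  have PB: "P v* B = (\<Sum>k\<le>m. h^Suc k *\<^sub>R v k) + h^Suc n *\<^sub>R (v (Suc n) v* B)"
  proof -
    have "P v* B = (\<Sum>k\<le>n. h^k *\<^sub>R (v k v* B)) + h^Suc n *\<^sub>R (v (Suc n) v* B)"
      unfolding P_def sum_vB by simp
    moreover have "(\<Sum>k\<le>n. h^k *\<^sub>R (v k v* B)) = (\<Sum>k\<le>m. h^Suc k *\<^sub>R (v (Suc k) v* B))"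
      unfolding m sum.atMost_Suc_shift using B0 by simp
    moreover have "(\<Sum>k\<le>m. h^Suc k *\<^sub>R (v (Suc k) v* B)) = (\<Sum>k\<le>m. h^Suc k *\<^sub>R v k)"
      by (rule sum.cong) (use Bs m in auto)
    ultimately show ?thesis by simp
  qed
  have P: "P = (\<Sum>k\<le>m. h^k *\<^sub>R v k) + h^n *\<^sub>R v n + h^Suc n *\<^sub>R v (Suc n)"
    unfolding P_def m by simp
  have tsum: "t *\<^sub>R (\<Sum>k\<le>m. h^Suc k *\<^sub>R v k) = (\<Sum>k\<le>m. h^k *\<^sub>R v k)"
    by (simp add: scaleR_sum_right thk del: power_Suc)
  have "P - t *\<^sub>R (P v* B) = ((\<Sum>k\<le>m. h^k *\<^sub>R v k) + h^n *\<^sub>R v n + h^Suc n *\<^sub>R v (Suc n))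
       - t *\<^sub>R ((\<Sum>k\<le>m. h^Suc k *\<^sub>R v k) + h^Suc n *\<^sub>R (v (Suc n) v* B))"
    by (simp only: PB) (simp only: P)
  also have "\<dots> = h^n *\<^sub>R v n + h^Suc n *\<^sub>R v (Suc n) - (t * h^Suc n) *\<^sub>R (v (Suc n) v* B)"
    unfolding scaleR_add_right tsum by (simp add: scaleR_scaleR)
  also have "\<dots> = h^n *\<^sub>R v n + h^Suc n *\<^sub>R v (Suc n) - h^n *\<^sub>R (v (Suc n) v* B)"
    by (simp only: thk)
  finally have eq1: "P - t *\<^sub>R (P v* B) = h^n *\<^sub>R v n + h^Suc n *\<^sub>R v (Suc n) - h^n *\<^sub>R (v (Suc n) v* B)" .
  have e1: "\<bar>t\<bar>^n * h^n = sgn t ^ n"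
    using abs_inv_sgn[OF t] by (simp add: h_def power_mult_distrib[symmetric])
  have e2: "\<bar>t\<bar>^n * h^Suc n = sgn t ^ n * h"
  proof -
    have "\<bar>t\<bar>^n * h^Suc n = (\<bar>t\<bar>^n * h^n) * h" by (simp only: power_Suc2 mult.assoc)
    then show ?thesis using e1 by simp
  qed
  have "\<bar>t\<bar>^n *\<^sub>R (P - t *\<^sub>R (P v* B))
      = (\<bar>t\<bar>^n * h^n) *\<^sub>R v n + (\<bar>t\<bar>^n * h^Suc n) *\<^sub>R v (Suc n) - (\<bar>t\<bar>^n * h^n) *\<^sub>R (v (Suc n) v* B)"
    unfolding eq1 by (simp only: scaleR_diff_right scaleR_add_right scaleR_scaleR)
  also have "\<dots> = sgn t ^ n *\<^sub>R (v n - v (Suc n) v* B) + (sgn t ^ n * h) *\<^sub>R v (Suc n)"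
    unfolding e1 e2 by (simp add: scaleR_diff_right algebra_simps)
  finally have "\<bar>t\<bar>^n *\<^sub>R (P - t *\<^sub>R (P v* B)) = sgn t ^ n *\<^sub>R (v n - v (Suc n) v* B) + (sgn t ^ n * h) *\<^sub>R v (Suc n)" .
  then show ?thesis by (simp only: P_def h_def)
qed



lemma sc_aux: "c *\<^sub>R x - t *\<^sub>R c *\<^sub>R y = c *\<^sub>R (x - t *\<^sub>R (y::'a::real_vector))"
proof -
  have "t *\<^sub>R c *\<^sub>R y = c *\<^sub>R t *\<^sub>R y" by (simp add: scaleR_scaleR mult.commute)
  then show ?thesis by (simp add: scaleR_diff_right)
qed

lemma matrix_diff_rdistrib: "((A::real^'n^'m) - C) ** (Y::real^'p^'n) = A ** Y - C ** Y"
  by (simp add: vec_eq_iff row_mult vector_matrix_mult_diff_distrib)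

lemma mm_zero:
  fixes f :: "'a \<Rightarrow> real^'n^'m"
  assumes "(f \<longlongrightarrow> 0) F"
  shows "((\<lambda>t. f t ** (Y::real^'p^'n)) \<longlongrightarrow> 0) F"
proof (rule vec_tendstoI)
  fix i
  have "((\<lambda>t. f t $ i) \<longlongrightarrow> 0 $ i) F" using assms by (rule tendsto_vec_nth)
  then have "((\<lambda>t. f t $ i) \<longlongrightarrow> 0) F" by simp
  then have "((\<lambda>t. f t $ i v* Y) \<longlongrightarrow> 0) F" by (rule bounded_linear.tendsto_zero[OF bl_vB])
  then show "((\<lambda>t. (f t ** Y) $ i) \<longlongrightarrow> 0 $ i) F" by (simp add: row_mult)
qed

lemma det_limit_one:
  fixes K :: "'a \<Rightarrow> real^'n^'n"
  assumes "(K \<longlongrightarrow> X) F" "F \<noteq> bot" "eventually (\<lambda>t. det (K t) = 1) F"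
  shows "det X = 1"
proof -
  have "((\<lambda>t. det (K t)) \<longlongrightarrow> det X) F" using assms(1) by (rule tendsto_det)
  moreover have "((\<lambda>t. det (K t)) \<longlongrightarrow> 1) F"
    by (rule Lim_transform_eventually[OF tendsto_const]) (use assms(3) in \<open>auto elim: eventually_mono\<close>)
  ultimately show ?thesis using tendsto_unique[OF assms(2)] by blast
qed

lemma lim_side:
  fixes K Xi :: "real \<Rightarrow> real^'n^'n"
  assumes "((\<lambda>t. K t - Xi t) \<longlongrightarrow> 0) at_infinity" "F \<le> at_infinity" "eventually (\<lambda>t. Xi t = X) F"
  shows "(K \<longlongrightarrow> X) F"
proof -
  have "((\<lambda>t. K t - Xi t) \<longlongrightarrow> 0) F" using assms(1,2) by (rule tendsto_mono[rotated])
  then have "((\<lambda>t. (K t - Xi t) + X) \<longlongrightarrow> 0 + X) F" by (intro tendsto_add tendsto_const)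
  then have "((\<lambda>t. (K t - Xi t) + X) \<longlongrightarrow> X) F" by simp
  then show ?thesis
    by (rule Lim_transform_eventually) (use assms(3) in \<open>auto elim: eventually_mono\<close>)
qed

theorem lemma2p1:
  fixes \<Phi> :: "real \<Rightarrow> (real^('n::{finite,wellorder}))^('n::{finite,wellorder})"
    and \<Omega> :: "real set" and s :: real
  assumes n_ge: "CARD('n) \<ge> 2"
    and open_\<Omega>: "open \<Omega>"
    and SL: "\<forall>x\<in>\<Omega>. det (\<Phi> x) = 1"
    and C1: "\<Phi> C1_differentiable_on \<Omega>"
    and s_in: "s \<in> \<Omega>"
    and diff: "\<exists>D. higher_diff_at (CARD('n)) (\<lambda>x. \<Phi> x $ first_idx) s D"
    and nondeg: "nondeg_at (\<lambda>x. \<Phi> x $ first_idx) \<Omega> s"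
  shows "\<exists>B \<xi>p \<xi>m E.
           nilpotent_mat B \<and> rank B = CARD('n) - 1 \<and>
           det \<xi>p = 1 \<and> det \<xi>m = 1 \<and>
           ((\<lambda>t. t *\<^sub>R E t) \<longlongrightarrow> 0) at_infinity \<and>
           (\<forall>t. t \<noteq> 0 \<and> s + inverse t \<in> \<Omega> \<longrightarrow>
              a_diag \<bar>t\<bar> ** \<Phi> (s + inverse t) =
                (mat 1 + t *\<^sub>R E t) ** (if t > 0 then \<xi>p else \<xi>m)
                  ** matrix_inv (mat 1 - t *\<^sub>R B))"
proof -
  define n where "n = CARD('n) - 1"
  have card: "CARD('n) = Suc n" and n1: "n \<ge> 1" using n_ge by (auto simp: n_def)
  define \<phi> where "\<phi> = (\<lambda>x. \<Phi> x $ first_idx)"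
  obtain D where hd: "higher_diff_at (CARD('n)) \<phi> s D" using diff unfolding \<phi>_def by blast
  have nd: "nondeg_at \<phi> \<Omega> s" using nondeg by (simp add: \<phi>_def)
  have spD: "span {D k s | k. k \<le> CARD('n) - 1} = UNIV" by (rule nondeg_span[OF n_ge hd nd])
  define v where "v k = inverse (fact k) *\<^sub>R D k s" for k
  have sp: "span (v ` {..n}) = UNIV"
  proof -
    have "{D k s | k. k \<le> CARD('n) - 1} \<subseteq> span (v ` {..n})"
    proof
      fix y assume "y \<in> {D k s | k. k \<le> CARD('n) - 1}"
      then obtain k where k: "k \<le> n" "y = D k s" by (auto simp: n_def)
      have "y = fact k *\<^sub>R v k" using k by (simp add: v_def)
      moreover have "v k \<in> span (v ` {..n})" using k by (intro span_base) auto
      ultimately show "y \<in> span (v ` {..n})" by (simp add: span_scale)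
    qed
    then have "span {D k s | k. k \<le> CARD('n) - 1} \<subseteq> span (v ` {..n})"
      by (rule span_minimal[OF _ subspace_span])
    then show ?thesis using spD by auto
  qed
  have ind: "independent (v ` {..n})" and inj: "inj_on v {..n}" using indep_inj[OF card sp] by auto
  obtain g where lin: "linear g" and g0: "g (v 0) = 0" and gs: "\<forall>k<n. g (v (Suc k)) = v k"
    using exists_g[OF ind inj] by blast
  define B where "B = transpose (matrix g)"
  have Bx: "x v* B = g x" for x unfolding B_def using matrix_vector_mul(2)[OF lin] by (metis vector_transpose_matrix)
  have B0: "v 0 v* B = 0" and Bs: "\<forall>k<n. v (Suc k) v* B = v k" using g0 gs Bx by auto
  have nilB: "nilpotent_mat B" by (rule nilp[OF lin Bx sp g0 gs])
  have rkB: "rank B = CARD('n) - 1" using rank_g[OF lin Bx sp ind inj g0 gs] n_def by simp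
  have dB: "det (mat 1 - t *\<^sub>R B) = 1" for t by (rule det_shift[OF card sp B0 Bs])
  have T: "\<forall>e>0. \<exists>d>0. \<forall>h. \<bar>h\<bar> < d \<longrightarrow> norm (\<phi> (s+h) - (\<Sum>k\<le>Suc n. h^k *\<^sub>R v k)) \<le> e * \<bar>h\<bar>^Suc n"
  proof -
    have *: "(h^k / fact k) *\<^sub>R D k s = h^k *\<^sub>R v k" for h :: real and k
      by (simp add: v_def divide_inverse)
    show ?thesis using taylor_peano[OF hd] card by (simp add: *)
  qed
  define R where "R h = \<phi> (s+h) - (\<Sum>k\<le>Suc n. h^k *\<^sub>R v k)" for h
  have \<Phi>cont: "isCont \<Phi> s"
  proof -
    from C1 obtain D'' where "\<forall>x\<in>\<Omega>. (\<Phi> has_vector_derivative D'' x) (at x)"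
      unfolding C1_differentiable_on_def by blast
    then show ?thesis using s_in has_vector_derivative_continuous by blast
  qed
  have \<Phi>lim: "((\<lambda>t. \<Phi> (s + inverse t)) \<longlongrightarrow> \<Phi> s) at_infinity"
  proof -
    have "((\<lambda>t. s + inverse t) \<longlongrightarrow> s + 0) at_infinity"
      by (intro tendsto_add tendsto_const tendsto_inverse_0)
    then show ?thesis using isCont_tendsto_compose[OF \<Phi>cont] by simp
  qed
  obtain \<epsilon> where "\<epsilon> > 0" "ball s \<epsilon> \<subseteq> \<Omega>" using open_\<Omega> s_in open_contains_ball by blast
  have ev: "eventually (\<lambda>t. t \<noteq> 0 \<and> s + inverse t \<in> \<Omega>) at_infinity"
    unfolding eventually_at_infinity
  proof (intro exI[of _ "2/\<epsilon>"] allI impI)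
    fix t :: real assume t: "2/\<epsilon> \<le> norm t"
    then have "\<bar>t\<bar> > 0" using \<open>\<epsilon>>0\<close> by (smt (verit) divide_pos_pos real_norm_def)
    have "\<bar>inverse t\<bar> < \<epsilon>"
    proof -
      have "\<bar>inverse t\<bar> = inverse \<bar>t\<bar>" by simp
      also have "\<dots> \<le> inverse (2/\<epsilon>)" using t \<open>\<epsilon>>0\<close> by (intro le_imp_inverse_le) auto
      also have "\<dots> < \<epsilon>" using \<open>\<epsilon>>0\<close> by simp
      finally show ?thesis .
    qed
    then have "s + inverse t \<in> ball s \<epsilon>" by (simp add: dist_real_def)
    then show "t \<noteq> 0 \<and> s + inverse t \<in> \<Omega>" using \<open>\<bar>t\<bar> > 0\<close> \<open>ball s \<epsilon> \<subseteq> \<Omega>\<close> by auto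
  qed

  define \<xi> where "\<xi> \<sigma> = (\<chi> i. if i = first_idx then \<sigma>^n *\<^sub>R (v n - v (Suc n) v* B) else (-\<sigma>) *\<^sub>R (\<Phi> s $ i v* B))" for \<sigma> :: real
  define Xi where "Xi t = (if t > 0 then \<xi> 1 else \<xi> (-1))" for t :: real
  have Xi_sgn: "Xi t = \<xi> (sgn t)" if "t \<noteq> 0" for t using that by (auto simp: Xi_def)
  define K where "K t = a_diag \<bar>t\<bar> ** \<Phi> (s + inverse t) ** (mat 1 - t *\<^sub>R B)" for t
  have Krow: "K t $ i = (if i = first_idx then \<bar>t\<bar>^n else inverse \<bar>t\<bar>) *\<^sub>R
      (\<Phi> (s + inverse t) $ i - t *\<^sub>R (\<Phi> (s + inverse t) $ i v* B))" for t i
  proof -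
    have "K t $ i = (a_diag \<bar>t\<bar> ** \<Phi> (s + inverse t)) $ i v* (mat 1 - t *\<^sub>R B)"
      unfolding K_def by (rule row_mult)
    also have "\<dots> = ((if i = first_idx then \<bar>t\<bar>^n else inverse \<bar>t\<bar>) *\<^sub>R \<Phi> (s + inverse t) $ i) v* (mat 1 - t *\<^sub>R B)"
      unfolding a_diag_row n_def by simp
    also have "\<dots> = (if i = first_idx then \<bar>t\<bar>^n else inverse \<bar>t\<bar>) *\<^sub>R
      (\<Phi> (s + inverse t) $ i - t *\<^sub>R (\<Phi> (s + inverse t) $ i v* B))"
      by (simp only: scaleR_vector_matrix_assoc vector_matrix_mult_diff_rdistrib vector_matrix_mul_rid
          vector_scaleR_matrix_ac) (rule sc_aux)
    finally show ?thesis .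
  qed
  have sgn1: "\<bar>sgn t\<bar> \<le> 1" for t :: real by (cases "t = 0") (auto simp: abs_sgn)
  have sgnp: "\<bar>sgn t ^ n\<bar> \<le> 1" for t :: real
    unfolding power_abs by (rule power_le_one) (simp_all add: sgn1)
  have ev0: "eventually (\<lambda>t::real. t \<noteq> 0) at_infinity" using ev by (auto elim: eventually_mono)
  have conv: "((\<lambda>t. K t - Xi t) \<longlongrightarrow> 0) at_infinity"
  proof (rule vec_tendstoI)
    fix i
    show "((\<lambda>t. (K t - Xi t) $ i) \<longlongrightarrow> 0 $ i) at_infinity"
    proof (cases "i = first_idx")
      case True
      define Rt where "Rt t = \<bar>t\<bar>^Suc n *\<^sub>R R (inverse t)" for t
      have Rt0: "(Rt \<longlongrightarrow> 0) at_infinity" unfolding Rt_def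
        by (rule rem_lim) (use T in \<open>simp add: R_def\<close>)
      have expr: "(K t - Xi t) $ i = sgn t ^ n *\<^sub>R (inverse t *\<^sub>R v (Suc n)) + \<bar>inverse t\<bar> *\<^sub>R Rt t - sgn t *\<^sub>R (Rt t v* B)"
        if t: "t \<noteq> 0" for t
      proof -
        define P where "P = (\<Sum>k\<le>Suc n. inverse t ^ k *\<^sub>R v k)"
        define Rr where "Rr = R (inverse t)"
        have phi: "\<Phi> (s + inverse t) $ i = P + Rr" using True by (simp add: R_def \<phi>_def P_def Rr_def)
        have "K t $ i = \<bar>t\<bar>^n *\<^sub>R ((P + Rr) - t *\<^sub>R ((P + Rr) v* B))" using Krow[of t i] True phi by simp
        also have "\<dots> = \<bar>t\<bar>^n *\<^sub>R (P - t *\<^sub>R (P v* B)) + \<bar>t\<bar>^n *\<^sub>R Rr - (\<bar>t\<bar>^n * t) *\<^sub>R (Rr v* B)"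
          by (simp add: vector_matrix_left_distrib scaleR_add_right scaleR_diff_right algebra_simps)
        also have "\<bar>t\<bar>^n *\<^sub>R (P - t *\<^sub>R (P v* B)) = sgn t ^ n *\<^sub>R (v n - v (Suc n) v* B) + (sgn t ^ n * inverse t) *\<^sub>R v (Suc n)"
          unfolding P_def by (rule first_row_identity[OF B0 Bs n1 t])
        finally have Ki: "K t $ i = sgn t ^ n *\<^sub>R (v n - v (Suc n) v* B) + (sgn t ^ n * inverse t) *\<^sub>R v (Suc n)
            + \<bar>t\<bar>^n *\<^sub>R Rr - (\<bar>t\<bar>^n * t) *\<^sub>R (Rr v* B)" .
        have Xii: "Xi t $ i = sgn t ^ n *\<^sub>R (v n - v (Suc n) v* B)" using Xi_sgn[OF t] True by (simp add: \<xi>_def)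
        have f1: "\<bar>inverse t\<bar> * \<bar>t\<bar>^Suc n = \<bar>t\<bar>^n" using t by (simp add: abs_inverse)
        have f2: "sgn t * \<bar>t\<bar>^Suc n = \<bar>t\<bar>^n * t"
        proof -
          have "sgn t * \<bar>t\<bar>^Suc n = (sgn t * \<bar>t\<bar>) * \<bar>t\<bar>^n" by (simp only: power_Suc mult.assoc)
          also have "\<dots> = t * \<bar>t\<bar>^n" by (simp only: sgn_mult_abs)
          also have "\<dots> = \<bar>t\<bar>^n * t" by (rule mult.commute)
          finally show ?thesis .
        qed
        have A: "\<bar>inverse t\<bar> *\<^sub>R Rt t = \<bar>t\<bar>^n *\<^sub>R Rr" unfolding Rt_def Rr_def scaleR_scaleR f1 ..
        have B': "sgn t *\<^sub>R (Rt t v* B) = (\<bar>t\<bar>^n * t) *\<^sub>R (Rr v* B)"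
          by (simp add: Rt_def Rr_def scaleR_vector_matrix_assoc f2[symmetric] del: power_Suc)
        have "(K t - Xi t) $ i = K t $ i - Xi t $ i" by simp
        also have "\<dots> = (sgn t ^ n * inverse t) *\<^sub>R v (Suc n) + \<bar>t\<bar>^n *\<^sub>R Rr - (\<bar>t\<bar>^n * t) *\<^sub>R (Rr v* B)"
          unfolding Ki Xii by (simp add: algebra_simps)
        also have "\<dots> = sgn t ^ n *\<^sub>R (inverse t *\<^sub>R v (Suc n)) + \<bar>inverse t\<bar> *\<^sub>R Rt t - sgn t *\<^sub>R (Rt t v* B)"
          by (simp only: A B' scaleR_scaleR)
        finally show ?thesis .
      qed
      have lim: "((\<lambda>t. sgn t ^ n *\<^sub>R (inverse t *\<^sub>R v (Suc n)) + \<bar>inverse t\<bar> *\<^sub>R Rt t - sgn t *\<^sub>R (Rt t v* B)) \<longlongrightarrow> 0) at_infinity"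
      proof -
        have "((\<lambda>t. inverse t *\<^sub>R v (Suc n)) \<longlongrightarrow> 0 *\<^sub>R v (Suc n)) at_infinity"
          by (intro tendsto_scaleR tendsto_const tendsto_inverse_0)
        then have "((\<lambda>t. inverse t *\<^sub>R v (Suc n)) \<longlongrightarrow> 0) at_infinity" by simp
        then have a: "((\<lambda>t. sgn t ^ n *\<^sub>R (inverse t *\<^sub>R v (Suc n))) \<longlongrightarrow> 0) at_infinity"
          by (rule bounded_scale_zero) (rule sgnp)
        have "((\<lambda>t. \<bar>inverse t\<bar> *\<^sub>R Rt t) \<longlongrightarrow> 0 *\<^sub>R 0) at_infinity"
          by (intro tendsto_scaleR Rt0 tendsto_rabs_zero tendsto_inverse_0)
        then have b: "((\<lambda>t. \<bar>inverse t\<bar> *\<^sub>R Rt t) \<longlongrightarrow> 0) at_infinity" by simp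
        have "((\<lambda>t. Rt t v* B) \<longlongrightarrow> 0) at_infinity" by (rule bounded_linear.tendsto_zero[OF bl_vB Rt0])
        then have c: "((\<lambda>t. sgn t *\<^sub>R (Rt t v* B)) \<longlongrightarrow> 0) at_infinity"
          by (rule bounded_scale_zero) (rule sgn1)
        show ?thesis using tendsto_diff[OF tendsto_add[OF a b] c] by simp
      qed
      show ?thesis unfolding zero_index
        by (rule Lim_transform_eventually[OF lim], rule eventually_mono[OF ev0], rule expr[symmetric], assumption)
    next
      case False
      have expr: "(K t - Xi t) $ i = \<bar>inverse t\<bar> *\<^sub>R \<Phi> (s + inverse t) $ i - sgn t *\<^sub>R ((\<Phi> (s + inverse t) $ i - \<Phi> s $ i) v* B)"
        if t: "t \<noteq> 0" for t
      proof -
        have Ki: "K t $ i = inverse \<bar>t\<bar> *\<^sub>R \<Phi> (s + inverse t) $ i - (inverse \<bar>t\<bar> * t) *\<^sub>R (\<Phi> (s + inverse t) $ i v* B)"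
          using Krow[of t i] False by (simp add: scaleR_diff_right)
        have sg: "inverse \<bar>t\<bar> * t = sgn t" using t by (cases "t > 0") auto
        have Xii: "Xi t $ i = (- sgn t) *\<^sub>R (\<Phi> s $ i v* B)" using Xi_sgn[OF t] False by (simp add: \<xi>_def)
        have "(K t - Xi t) $ i = K t $ i - Xi t $ i" by simp
        also have "\<dots> = inverse \<bar>t\<bar> *\<^sub>R \<Phi> (s + inverse t) $ i - sgn t *\<^sub>R (\<Phi> (s + inverse t) $ i v* B)
            + sgn t *\<^sub>R (\<Phi> s $ i v* B)"
          unfolding Ki Xii sg by simp
        also have "\<dots> = \<bar>inverse t\<bar> *\<^sub>R \<Phi> (s + inverse t) $ i - sgn t *\<^sub>R ((\<Phi> (s + inverse t) $ i - \<Phi> s $ i) v* B)"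
          by (simp add: vector_matrix_mult_diff_distrib scaleR_diff_right)
        finally show ?thesis .
      qed
      have lim: "((\<lambda>t. \<bar>inverse t\<bar> *\<^sub>R \<Phi> (s + inverse t) $ i - sgn t *\<^sub>R ((\<Phi> (s + inverse t) $ i - \<Phi> s $ i) v* B)) \<longlongrightarrow> 0) at_infinity"
      proof -
        have c1: "((\<lambda>t. \<Phi> (s + inverse t) $ i) \<longlongrightarrow> \<Phi> s $ i) at_infinity" by (rule tendsto_vec_nth[OF \<Phi>lim])
        have "((\<lambda>t. \<bar>inverse t\<bar> *\<^sub>R \<Phi> (s + inverse t) $ i) \<longlongrightarrow> 0 *\<^sub>R \<Phi> s $ i) at_infinity"
          by (intro tendsto_scaleR c1 tendsto_rabs_zero tendsto_inverse_0)
        then have a: "((\<lambda>t. \<bar>inverse t\<bar> *\<^sub>R \<Phi> (s + inverse t) $ i) \<longlongrightarrow> 0) at_infinity" by simp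
        have "((\<lambda>t. \<Phi> (s + inverse t) $ i - \<Phi> s $ i) \<longlongrightarrow> \<Phi> s $ i - \<Phi> s $ i) at_infinity"
          by (intro tendsto_diff c1 tendsto_const)
        then have "((\<lambda>t. \<Phi> (s + inverse t) $ i - \<Phi> s $ i) \<longlongrightarrow> 0) at_infinity" by simp
        then have "((\<lambda>t. (\<Phi> (s + inverse t) $ i - \<Phi> s $ i) v* B) \<longlongrightarrow> 0) at_infinity"
          by (rule bounded_linear.tendsto_zero[OF bl_vB])
        then have b: "((\<lambda>t. sgn t *\<^sub>R ((\<Phi> (s + inverse t) $ i - \<Phi> s $ i) v* B)) \<longlongrightarrow> 0) at_infinity"
          by (rule bounded_scale_zero) (rule sgn1)
        show ?thesis using tendsto_diff[OF a b] by simp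
      qed
      show ?thesis unfolding zero_index
        by (rule Lim_transform_eventually[OF lim], rule eventually_mono[OF ev0], rule expr[symmetric], assumption)
    qed
  qed

  have detK: "det (K t) = 1" if "t \<noteq> 0" "s + inverse t \<in> \<Omega>" for t
  proof -
    have "det (a_diag \<bar>t\<bar> :: real^('n::{finite,wellorder})^('n::{finite,wellorder})) = 1" using that by (intro det_a_diag) simp
    then show ?thesis unfolding K_def det_mul using that SL dB by simp
  qed
  have evK: "eventually (\<lambda>t. det (K t) = 1) at_infinity"
    by (rule eventually_mono[OF ev]) (use detK in blast)
  have lim_top: "(K \<longlongrightarrow> \<xi> 1) at_top"
    by (rule lim_side[OF conv at_top_le_at_infinity], rule eventually_mono[OF eventually_gt_at_top[of 0]])
       (simp add: Xi_def)
  have lim_bot: "(K \<longlongrightarrow> \<xi> (-1)) at_bot"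
    by (rule lim_side[OF conv at_bot_le_at_infinity], rule eventually_mono[OF eventually_gt_at_bot[of 0]])
       (simp add: Xi_def)
  have det1: "det (\<xi> 1) = 1"
    by (rule det_limit_one[OF lim_top]) (simp_all add: filter_leD[OF at_top_le_at_infinity evK])
  have det2: "det (\<xi> (-1)) = 1"
    by (rule det_limit_one[OF lim_bot]) (simp_all add: filter_leD[OF at_bot_le_at_infinity evK])
  have dXi: "det (Xi t) = 1" for t by (simp add: Xi_def det1 det2)
  define Y where "Y t = matrix_inv (Xi t)" for t
  define E where "E t = (if t \<noteq> 0 \<and> s + inverse t \<in> \<Omega> then inverse t *\<^sub>R (K t ** Y t - mat 1) else 0)" for t
  have KY: "mat 1 + t *\<^sub>R E t = K t ** Y t" if "t \<noteq> 0" "s + inverse t \<in> \<Omega>" for t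
    using that by (simp add: E_def)
  have tE: "(K t - Xi t) ** Y t = t *\<^sub>R E t" if "t \<noteq> 0 \<and> s + inverse t \<in> \<Omega>" for t
  proof -
    have "Xi t ** Y t = mat 1" using inv_props(1)[of "Xi t"] dXi by (simp add: Y_def)
    then have "(K t - Xi t) ** Y t = K t ** Y t - mat 1" by (simp add: matrix_diff_rdistrib)
    also have "\<dots> = t *\<^sub>R E t" using that by (simp add: E_def)
    finally show ?thesis .
  qed
  have Elim: "((\<lambda>t. t *\<^sub>R E t) \<longlongrightarrow> 0) at_infinity"
  proof -
    have l1: "((\<lambda>t. (K t - Xi t) ** matrix_inv (\<xi> 1)) \<longlongrightarrow> 0) at_infinity" by (rule mm_zero[OF conv])
    have l2: "((\<lambda>t. (K t - Xi t) ** matrix_inv (\<xi> (-1))) \<longlongrightarrow> 0) at_infinity" by (rule mm_zero[OF conv])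
    have "((\<lambda>t. (K t - Xi t) ** Y t) \<longlongrightarrow> 0) at_infinity"
    proof (rule Lim_null_comparison)
      show "eventually (\<lambda>t. norm ((K t - Xi t) ** Y t) \<le> norm ((K t - Xi t) ** matrix_inv (\<xi> 1))
              + norm ((K t - Xi t) ** matrix_inv (\<xi> (-1)))) at_infinity"
        by (intro always_eventually allI) (simp add: Y_def Xi_def)
      show "((\<lambda>t. norm ((K t - Xi t) ** matrix_inv (\<xi> 1)) + norm ((K t - Xi t) ** matrix_inv (\<xi> (-1)))) \<longlongrightarrow> 0) at_infinity"
        using tendsto_add[OF tendsto_norm_zero[OF l1] tendsto_norm_zero[OF l2]] by simp
    qed
    moreover have "eventually (\<lambda>t. (K t - Xi t) ** Y t = t *\<^sub>R E t) at_infinity"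
      using ev by (rule eventually_mono) (rule tE)
    ultimately show ?thesis by (rule Lim_transform_eventually)
  qed
  show ?thesis
  proof (rule exI[of _ B], rule exI[of _ "\<xi> 1"], rule exI[of _ "\<xi> (-1)"], rule exI[of _ E], intro conjI)
    show "nilpotent_mat B" by (rule nilB)
    show "rank B = CARD('n) - 1" by (rule rkB)
    show "det (\<xi> 1) = 1" by (rule det1)
    show "det (\<xi> (-1)) = 1" by (rule det2)
    show "((\<lambda>t. t *\<^sub>R E t) \<longlongrightarrow> 0) at_infinity" by (rule Elim)
    show "\<forall>t. t \<noteq> 0 \<and> s + inverse t \<in> \<Omega> \<longrightarrow>
              a_diag \<bar>t\<bar> ** \<Phi> (s + inverse t) =
                (mat 1 + t *\<^sub>R E t) ** (if t > 0 then \<xi> 1 else \<xi> (-1)) ** matrix_inv (mat 1 - t *\<^sub>R B)"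
    proof (intro allI impI)
      fix t assume h: "t \<noteq> 0 \<and> s + inverse t \<in> \<Omega>"
      have xe: "(if t > 0 then \<xi> 1 else \<xi> (-1)) = Xi t" by (simp add: Xi_def)
      have a1: "(K t ** Y t) ** Xi t = K t"
        using inv_props(2)[of "Xi t"] dXi by (simp add: Y_def matrix_mul_assoc[symmetric])
      have a2: "K t ** matrix_inv (mat 1 - t *\<^sub>R B) = a_diag \<bar>t\<bar> ** \<Phi> (s + inverse t)"
        unfolding K_def using inv_props(1)[of "mat 1 - t *\<^sub>R B"] dB by (simp add: matrix_mul_assoc[symmetric])
      show "a_diag \<bar>t\<bar> ** \<Phi> (s + inverse t) =
                (mat 1 + t *\<^sub>R E t) ** (if t > 0 then \<xi> 1 else \<xi> (-1)) ** matrix_inv (mat 1 - t *\<^sub>R B)"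
        unfolding xe KY[OF conjunct1[OF h] conjunct2[OF h]] a1 a2 ..
    qed
  qed
qed


end
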